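(* Let $K\ge 2$, $0<q<p$ with $p+(K-1)q=1$, and $\phi\in\Delta$. Suppose the smallest entry of $\phi$, say $\phi_m$, satisfies $\phi_m<q$, and the second smallest entry of $\phi$ is at least $\frac{Kq-\phi_m}{K-1}$. Then the three points $\mathrm{InvP}(\phi)$, $\mathrm{MLE}^*(\phi)$, $\mathrm{InvN}(\phi)$ of $\mathbb{R}^K$ are collinear, and $\mathrm{MLE}^*(\phi)$ lies between $\mathrm{InvP}(\phi)$ and $\mathrm{InvN}(\phi)$ (on the segment joining them).
   Context: $\Delta=\{\theta\in\mathbb{R}^K:\theta_i\ge 0,\ \sum_i\theta_i=1\}$. $p,q$ are the parameters of the randomized response mechanism ($p$ = probability of reporting the true value, $q$ = probability of reporting each other value). Estimators: $\mathrm{Inv}(\phi)_i=\frac{\phi_i-q}{p-q}$; $\mathrm{InvN}(\phi)_i=\frac{\max(0,\mathrm{Inv}(\phi)_i)}{\sum_j\max(0,\mathrm{Inv}(\phi)_j)}$; $\mathrm{InvP}(\phi)=\arg\min_{\theta\in\Delta}\|\theta-\mathrm{Inv}(\phi)\|_2$ (Euclidean projection onto $\Delta$). $\mathrm{MLE}^*(\phi)$: for real $\tau$ let $m(\tau)=|\{i:\phi_i<\tau\}|$ and $c_\tau=\frac{1-m(\tau)q}{\sum_{i:\phi_i\ge\tau}\phi_i}$; let $\tau^*$ be the smallest $\tau\in\{\phi_1,\dots,\phi_K\}$ such that $c_\tau\phi_i\ge q$ for all $i$ with $\phi_i\ge\tau$; then $\mathrm{MLE}^*(\phi)_i=0$ if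 $\phi_i<\tau^*$ and $\frac{c_{\tau^*}\phi_i-q}{p-q}$ otherwise. *)

theory Defs
  imports "HOL-Analysis.Analysis"
begin

text \<open>Probability prob_simplex in R^K, with K = CARD('n).\<close>
definition prob_simplex :: "(real^'n) set" where
  "prob_simplex = {\<theta>. (\<forall>i. \<theta>$i \<ge> 0) \<and> (\<Sum>i\<in>UNIV. \<theta>$i) = 1}"

definition Inv :: "real \<Rightarrow> real \<Rightarrow> real^'n \<Rightarrow> real^'n" where
  "Inv p q \<phi> = (\<chi> i. (\<phi>$i - q) / (p - q))"

definition InvN :: "real \<Rightarrow> real \<Rightarrow> real^'n \<Rightarrow> real^'n" where
  "InvN p q \<phi> = (\<chi> i. max 0 (Inv p q \<phi> $ i) / (\<Sum>j\<in>UNIV. max 0 (Inv p q \<phi> $ j)))"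

definition InvP :: "real \<Rightarrow> real \<Rightarrow> real^'n \<Rightarrow> real^'n" where
  "InvP p q \<phi> = closest_point prob_simplex (Inv p q \<phi>)"

definition mcount :: "real^'n \<Rightarrow> real \<Rightarrow> nat" where
  "mcount \<phi> \<tau> = card {i. \<phi>$i < \<tau>}"

definition cfac :: "real \<Rightarrow> real^'n \<Rightarrow> real \<Rightarrow> real" where
  "cfac q \<phi> \<tau> = (1 - real (mcount \<phi> \<tau>) * q) / (\<Sum>i\<in>{i. \<phi>$i \<ge> \<tau>}. \<phi>$i)"

definition tau_star :: "real \<Rightarrow> real^'n \<Rightarrow> real" where
  "tau_star q \<phi> = Min {\<tau> \<in> range (\<lambda>i. \<phi>$i). \<forall>i. \<phi>$i \<ge> \<tau> \<longrightarrow> cfac q \<phi> \<tau> * \<phi>$i \<ge> q}"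

definition MLE_star :: "real \<Rightarrow> real \<Rightarrow> real^'n \<Rightarrow> real^'n" where
  "MLE_star p q \<phi> = (\<chi> i. if \<phi>$i < tau_star q \<phi> then 0
       else (cfac q \<phi> (tau_star q \<phi>) * \<phi>$i - q) / (p - q))"

end

theory Submission imports Defs begin
lemma ident:
  fixes k u q x d S :: real
  assumes "k \<noteq> 0" "d \<noteq> 0" "u \<noteq> 0" "S \<noteq> 0" "d = 1 - (k+1)*q" "S = u - k*q"
  shows "(((1-q)/u) * x - q)/d = (1 - S/u) * ((x-q)/d + ((1-u)-q)/(d*k))
     + (S/u) * ((x-q)/S)"
proof -
  have "(1 - S/u) * ((x-q)/d + ((1-u)-q)/(d*k)) + (S/u) * ((x-q)/S)
     = ((u - S) * ((x-q)*k + ((1-u)-q)) + k*d*(x-q)) / (u*d*k)"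
    using assms(1-4) by (simp add: field_simps)
  also have "\<dots> = (((1-q) * x - q*u)*k) / (u*d*k)"
    unfolding assms(5,6) by (simp add: algebra_simps)
  also have "\<dots> = (((1-q)/u) * x - q)/d"
    using assms(1-4) by (simp add: field_simps)
  finally show ?thesis by simp
qed
lemma simplex_closed: "closed (prob_simplex :: (real^'n) set)"
proof -
  have "prob_simplex = (\<Inter>i. {x::real^'n. x$i \<ge> 0}) \<inter> {x. (\<Sum>i\<in>UNIV. x$i) = 1}"
    by (auto simp: prob_simplex_def)
  moreover have "closed {x::real^'n. (\<Sum>i\<in>UNIV. x$i) = 1}"
    by (intro closed_Collect_eq continuous_intros)
  ultimately show ?thesis using closed_halfspace_component_ge_cart
    by (metis closed_INT closed_Int)
qed

lemma simplex_convex: "convex (prob_simplex :: (real^'n) set)"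
  unfolding convex_def prob_simplex_def
  by (auto simp: sum.distrib sum_distrib_left[symmetric])

theorem theorem2:
  fixes \<phi> :: "real^'n" and p q :: real and m :: 'n
  assumes "CARD('n) \<ge> 2"
    and "0 < q" and "q < p" and "p + (real CARD('n) - 1) * q = 1"
    and "\<phi> \<in> prob_simplex"
    and "\<forall>i. \<phi>$m \<le> \<phi>$i"
    and "\<phi>$m < q"
    and "\<forall>i. i \<noteq> m \<longrightarrow> \<phi>$i \<ge> (real CARD('n) * q - \<phi>$m) / (real CARD('n) - 1)"
  shows "collinear {InvP p q \<phi>, MLE_star p q \<phi>, InvN p q \<phi>}
    \<and> between (InvP p q \<phi>, InvN p q \<phi>) (MLE_star p q \<phi>)"
proof -
  define K where "K = real CARD('n)"
  define a where "a = \<phi>$m"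
  define k where "k = K - 1"
  define d where "d = p - q"
  define u where "u = 1 - a"
  define S where "S = u - k*q"
  define c where "c = (1-q)/u"
  define t where "t = S/u"
  define I where "I = UNIV - {m}"
  have K2: "K \<ge> 2" using assms(1) unfolding K_def by simp
  have k0: "k > 0" using K2 k_def by simp
  have dK: "d = 1 - (k+1)*q" using assms(4) unfolding d_def k_def K_def by (simp add: algebra_simps)
  have d0: "d > 0" using assms(3) d_def by simp
  have phinn: "\<And>i. \<phi>$i \<ge> 0" and phisum: "(\<Sum>i\<in>UNIV. \<phi>$i) = 1"
    using assms(5) by (auto simp: prob_simplex_def)
  have a0: "a \<ge> 0" using phinn a_def by simp
  have aq: "a < q" using assms(7) a_def by simp
  have Sd: "S - d = q - a" unfolding S_def dK u_def by (simp add: algebra_simps)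
  have S0: "S > 0" using Sd d0 aq by simp
  have u0: "u > 0" using S0 S_def k0 assms(2) by (smt (verit) mult_pos_pos)
  have sumI: "(\<Sum>i\<in>I. \<phi>$i) = u"
    using phisum sum.remove[of UNIV m "\<lambda>i. \<phi>$i"] unfolding I_def u_def a_def
    by (simp add: Compl_eq_Diff_UNIV[symmetric])
  have cardI: "real (card I) = k"
    unfolding I_def k_def K_def using assms(1) by (simp add: card_Diff_singleton of_nat_diff)
  have lowb: "\<And>i. i \<noteq> m \<Longrightarrow> \<phi>$i \<ge> ((k+1)*q - a)/k"
    using assms(8) unfolding k_def K_def a_def by simp
  have lowq: "((k+1)*q - a)/k > q" using aq k0 by (simp add: field_simps)
  have big: "\<And>i. i \<noteq> m \<Longrightarrow> \<phi>$i > q" using lowb lowq by force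

  have invN: "InvN p q \<phi> = (\<chi> i. if i = m then 0 else (\<phi>$i - q)/S)"
  proof -
    have Inv: "\<And>i. Inv p q \<phi> $ i = (\<phi>$i - q)/d" by (simp add: Inv_def d_def)
    have "(\<Sum>j\<in>UNIV. max 0 (Inv p q \<phi> $ j)) = (\<Sum>j\<in>I. (\<phi>$j - q)/d)"
    proof -
      have "(\<Sum>j\<in>UNIV. max 0 (Inv p q \<phi> $ j)) = max 0 (Inv p q \<phi> $ m) + (\<Sum>j\<in>I. max 0 (Inv p q \<phi> $ j))"
        unfolding I_def by (simp add: sum.remove)
      also have "\<dots> = (\<Sum>j\<in>I. (\<phi>$j - q)/d)"
        using aq d0 big unfolding Inv a_def I_def
        by (auto intro!: sum.cong simp: divide_le_0_iff)
      finally show ?thesis .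
    qed
    also have "\<dots> = (u - k*q)/d"
      by (simp add: sum_divide_distrib[symmetric] sum_subtractf sumI cardI)
    finally have sm: "(\<Sum>j\<in>UNIV. max 0 (Inv p q \<phi> $ j)) = S/d" unfolding S_def .
    show ?thesis
      unfolding InvN_def sm
      using aq d0 big S0 unfolding Inv a_def
      by (auto simp: vec_eq_iff divide_le_0_iff)
  qed

  define b where "b = Min ((\<lambda>i. \<phi>$i) ` I)"
  have Ine: "I \<noteq> {}"
  proof
    assume "I = {}"
    then have "card I = 0" by simp
    with cardI k0 show False by simp
  qed
  have bI: "b \<in> (\<lambda>i. \<phi>$i) ` I" unfolding b_def using Ine by (intro Min_in) auto
  have ble: "\<And>i. i \<noteq> m \<Longrightarrow> b \<le> \<phi>$i" unfolding b_def I_def by (intro Min_le) auto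
  have bq: "b > q" using bI big I_def by auto
  have lt_iff: "\<And>i. \<phi>$i < b \<longleftrightarrow> i = m"
    using ble bq aq a_def by (metis leD less_trans)
  have cfb: "cfac q \<phi> b = c"
  proof -
    have "{i. \<phi>$i < b} = {m}" using lt_iff by auto
    moreover have "{i. \<phi>$i \<ge> b} = I" using lt_iff unfolding I_def by (auto simp: not_less[symmetric])
    ultimately show ?thesis unfolding cfac_def mcount_def c_def using sumI by simp
  qed
  have key: "(1-q)*(((k+1)*q - a)/k) \<ge> q*u"
  proof -
    have "(1-q)*(((k+1)*q - a)) - q*u*k = (q-a)*d"
      unfolding dK u_def by (simp add: algebra_simps)
    moreover have "(q-a)*d \<ge> 0" using aq d0 by simp
    ultimately have "(1-q)*(((k+1)*q - a)) \<ge> q*u*k" by simp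
    then show ?thesis using k0 by (simp add: field_simps)
  qed
  have q1: "q < 1"
  proof -
    have "k*q > 0" using k0 assms(2) by simp
    then show ?thesis using dK d0 by (simp add: algebra_simps)
  qed
  have cgood: "\<And>i. i \<noteq> m \<Longrightarrow> c * \<phi>$i \<ge> q"
  proof -
    fix i assume "i \<noteq> m"
    then have "(1-q)*\<phi>$i \<ge> (1-q)*(((k+1)*q - a)/k)" using lowb q1 by (intro mult_left_mono) auto
    with key have "(1-q)*\<phi>$i \<ge> q*u" by simp
    then show "c * \<phi>$i \<ge> q" unfolding c_def using u0 by (simp add: field_simps)
  qed
  have tau: "tau_star q \<phi> = b"
    unfolding tau_star_def
  proof (rule Min_eqI)
    show "finite {\<tau> \<in> range (($) \<phi>). \<forall>i. \<tau> \<le> \<phi> $ i \<longrightarrow> q \<le> cfac q \<phi> \<tau> * \<phi> $ i}" by simp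
    show "b \<in> {\<tau> \<in> range (($) \<phi>). \<forall>i. \<tau> \<le> \<phi> $ i \<longrightarrow> q \<le> cfac q \<phi> \<tau> * \<phi> $ i}"
      using bI cfb cgood lt_iff by (auto simp: not_less[symmetric])
    fix y assume y: "y \<in> {\<tau> \<in> range (($) \<phi>). \<forall>i. \<tau> \<le> \<phi> $ i \<longrightarrow> q \<le> cfac q \<phi> \<tau> * \<phi> $ i}"
    then obtain j where yj: "y = \<phi>$j" by auto
    show "b \<le> y"
    proof (cases "j = m")
      case False then show ?thesis using ble yj by simp
    next
      case True
      have "{i. \<phi>$i < a} = {}" using assms(6) a_def by (auto simp: not_less)
      moreover have "{i. \<phi>$i \<ge> a} = UNIV" using assms(6) a_def by auto
      ultimately have "cfac q \<phi> a = 1" unfolding cfac_def mcount_def using phisum by simp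
      then have "q \<le> a" using y yj True a_def by auto
      with aq show ?thesis by simp
    qed
  qed
  have mle: "MLE_star p q \<phi> = (\<chi> i. if i = m then 0 else (c*\<phi>$i - q)/d)"
    unfolding MLE_star_def tau cfb using lt_iff by (simp add: vec_eq_iff d_def)

  define P where "P = (\<chi> i. if i = m then 0 else (\<phi>$i - q)/d + (a - q)/(d*k))"
  have invP: "InvP p q \<phi> = P"
  proof -
    define v where "v = Inv p q \<phi>"
    define C where "C = InvP p q \<phi>"
    have vi: "\<And>i. v$i = (\<phi>$i - q)/d" by (simp add: v_def Inv_def d_def)
    have Pi: "\<And>i. i \<noteq> m \<Longrightarrow> P$i = v$i + (a-q)/(d*k)" by (simp add: P_def vi)
    have sumP: "(\<Sum>i\<in>I. P$i) = 1"
    proof -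
      have "(\<Sum>i\<in>I. P$i) = (\<Sum>i\<in>I. (\<phi>$i - q)/d + (a - q)/(d*k))"
        unfolding I_def P_def by (intro sum.cong) auto
      also have "\<dots> = (u - k*q)/d + k*((a-q)/(d*k))"
        by (simp add: sum.distrib sum_divide_distrib[symmetric] sum_subtractf sumI cardI)
      also have "\<dots> = (u - k*q + (a-q))/d" using k0 d0 by (simp add: field_simps)
      also have "u - k*q + (a-q) = d" unfolding u_def dK by (simp add: algebra_simps)
      also have "d/d = 1" using d0 by simp
      finally show ?thesis .
    qed
    have PS: "P \<in> prob_simplex"
    proof -
      have "\<And>i. P$i \<ge> 0"
      proof -
        fix i show "P$i \<ge> 0"
        proof (cases "i = m")
          case False
          have "\<phi>$i - q \<ge> (q - a)/k" using lowb[OF False] k0 by (simp add: field_simps)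
          then have "(\<phi>$i - q)/d \<ge> ((q - a)/k)/d" using d0 by (intro divide_right_mono) auto
          moreover have "((q - a)/k)/d = -((a-q)/(d*k))" by (simp add: minus_divide_left mult.commute)
          ultimately show ?thesis using False by (simp add: P_def)
        qed (simp add: P_def)
      qed
      moreover have "(\<Sum>i\<in>UNIV. P$i) = 1"
        using sumP sum.remove[of UNIV m "\<lambda>i. P$i"] unfolding I_def by (simp add: P_def Compl_eq_Diff_UNIV[symmetric])
      ultimately show ?thesis by (simp add: prob_simplex_def)
    qed
    have ne: "(prob_simplex :: (real^'n) set) \<noteq> {}" using PS by auto
    have CS: "C \<in> prob_simplex" unfolding C_def InvP_def
      using closest_point_in_set[OF simplex_closed ne] .
    have d1: "inner (v - C) (P - C) \<le> 0" unfolding C_def v_def InvP_def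
      using closest_point_dot[OF simplex_convex simplex_closed PS] .
    have d2: "inner (v - P) (C - P) \<le> 0"
    proof -
      have Csum: "C$m + (\<Sum>i\<in>I. C$i) = 1"
        using CS sum.remove[of UNIV m "\<lambda>i. C$i"] unfolding I_def
        by (simp add: prob_simplex_def Compl_eq_Diff_UNIV[symmetric])
      have Cnn: "C$m \<ge> 0" using CS by (simp add: prob_simplex_def)
      have "inner (v - P) (C - P) = (v$m - P$m)*(C$m - P$m) + (\<Sum>i\<in>I. (v$i - P$i)*(C$i - P$i))"
        unfolding inner_vec_def I_def by (simp add: sum.remove)
      also have "\<dots> = v$m * C$m + (\<Sum>i\<in>I. ((q-a)/(d*k))*(C$i - P$i))"
      proof -
        have "\<And>i. i \<in> I \<Longrightarrow> v$i - P$i = (q-a)/(d*k)"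
          using Pi unfolding I_def by (auto simp: diff_divide_distrib)
        then show ?thesis by (simp add: P_def)
      qed
      also have "\<dots> = v$m * C$m + ((q-a)/(d*k)) * ((\<Sum>i\<in>I. C$i) - 1)"
        by (simp only: sum_distrib_left[symmetric] sum_subtractf sumP)
      also have "\<dots> = C$m * ((a-q)/d + (a-q)/(d*k))"
      proof -
        have s1: "(\<Sum>i\<in>I. C$i) - 1 = - C$m" using Csum by simp
        have s2: "v$m = (a-q)/d" using vi a_def by simp
        show ?thesis unfolding s1 s2 using d0 k0 by (simp add: field_simps)
      qed
      also have "\<dots> \<le> 0"
        using Cnn aq d0 k0 by (intro mult_nonneg_nonpos) (auto intro!: add_nonpos_nonpos simp: divide_le_0_iff)
      finally show ?thesis .
    qed
    have "inner (P - C) (P - C) = inner (v - C) (P - C) + inner (v - P) (C - P)"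
      by (simp add: inner_diff_left inner_diff_right inner_commute)
    also have "\<dots> \<le> 0" using d1 d2 by simp
    finally have "inner (P - C) (P - C) \<le> 0" .
    then have "P = C" by (metis inner_gt_zero_iff right_minus_eq not_le)
    then show ?thesis unfolding C_def by simp
  qed

  have t01: "0 \<le> t" "t \<le> 1" unfolding t_def using S0 u0 S_def k0 assms(2)
    by (auto simp: field_simps intro: mult_nonneg_nonneg)
  have comb: "(\<chi> i. if i = m then 0 else (c*\<phi>$i - q)/d)
      = (1 - t) *\<^sub>R P + t *\<^sub>R (\<chi> i. if i = m then 0 else (\<phi>$i - q)/S)"
  proof -
    have "\<And>i. i \<noteq> m \<Longrightarrow> (c*\<phi>$i - q)/d = (1 - t) * ((\<phi>$i - q)/d + (a - q)/(d*k)) + t * ((\<phi>$i - q)/S)"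
      unfolding c_def t_def a_def
      using ident[of k d u S q "\<phi>$_"] k0 d0 u0 S0 dK S_def u_def a_def by auto
    then show ?thesis by (simp add: vec_eq_iff P_def)
  qed
  have btw: "between (InvP p q \<phi>, InvN p q \<phi>) (MLE_star p q \<phi>)"
    unfolding between_mem_segment closed_segment_def invP invN mle comb
    using t01 by blast
  moreover have "collinear {InvP p q \<phi>, MLE_star p q \<phi>, InvN p q \<phi>}"
    using between_imp_collinear[OF btw] .
  ultimately show ?thesis by simp
qed
end
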